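(* Fix $p\in(0,1)$ and $q=1-p$. Let $\nu_n$ be the stationary law of the careless count chain on $\{0,\dots,n\}$. Then $\nu_n(n)\sim\frac{1}{(q;q)_\infty}\frac{n!}{n^n}q^{n(n+1)/2}$ as $n\to\infty$. Consequently, $\mu_n:=\mathbb P_{\nu_n}(K_0<n,K_1=n)=\nu_n(n)(1-q^n)\sim\frac{1}{(q;q)_\infty}\frac{n!}{n^n}q^{n(n+1)/2}$.
   Context: The careless count chain $(K_t)$ on $\{0,1,\dots,n\}$ is the Markov chain with transitions: given $K_t=k$, with probability $k/n$ one has $K_{t+1}\sim\mathrm{Bin}(k,q)$, and with probability $(n-k)/n$ one has $K_{t+1}\sim\mathrm{Bin}(k+1,q)$. (It is the number of held coupons in the careless collector where each round one uniformly drawn type is added and then each held coupon is independently lost with probability $p$.) It is irreducible and aperiodic with unique stationary law $\nu_n$. $(q;q)_\infty:=\prod_{r=1}^\infty(1-q^r)$. *)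

theory Defs
  imports "HOL-Analysis.Analysis" "HOL-Library.Landau_Symbols"
begin

definition binom_pmf :: "nat \<Rightarrow> real \<Rightarrow> nat \<Rightarrow> real" where
  "binom_pmf m q j = real (m choose j) * q ^ j * (1 - q) ^ (m - j)"

text \<open>Transition probability of the careless count chain on {0..n} with loss
  probability p (retention probability q = 1 - p), from state k to state j.\<close>
definition careless_P :: "nat \<Rightarrow> real \<Rightarrow> nat \<Rightarrow> nat \<Rightarrow> real" where
  "careless_P n p k j =
     real k / real n * binom_pmf k (1 - p) j
     + real (n - k) / real n * binom_pmf (k + 1) (1 - p) j"

definition careless_stationary :: "nat \<Rightarrow> real \<Rightarrow> (nat \<Rightarrow> real) \<Rightarrow> bool" where
  "careless_stationary n p \<nu> \<longleftrightarrow>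
     (\<forall>j. n < j \<longrightarrow> \<nu> j = 0) \<and> (\<forall>j\<le>n. 0 \<le> \<nu> j) \<and> (\<Sum>j\<le>n. \<nu> j) = 1 \<and>
     (\<forall>j\<le>n. \<nu> j = (\<Sum>k\<le>n. \<nu> k * careless_P n p k j))"

definition careless_nu :: "nat \<Rightarrow> real \<Rightarrow> nat \<Rightarrow> real" where
  "careless_nu n p = (THE \<nu>. careless_stationary n p \<nu>)"

definition careless_mu :: "nat \<Rightarrow> real \<Rightarrow> real" where
  "careless_mu n p = (\<Sum>k<n. careless_nu n p k * careless_P n p k n)"

definition qpoch_inf :: "real \<Rightarrow> real" where
  "qpoch_inf q = (\<Prod>r. 1 - q ^ Suc r)"

end

theory Submission
  imports Defs
begin

lemma binom_moment:
  fixes x :: real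
  assumes "m \<le> N"
  shows "(\<Sum>j\<le>N. binom_pmf m x j * real (j choose i)) = real (m choose i) * x ^ i"
proof (cases "i \<le> m")
  case False
  have "(\<Sum>j\<le>N. binom_pmf m x j * real (j choose i)) = 0"
  proof (rule sum.neutral, intro ballI)
    fix j assume "j \<in> {..N}"
    show "binom_pmf m x j * real (j choose i) = 0"
    proof (cases "j \<le> m")
      case True then have "j < i" using False by simp
      then show ?thesis by simp
    next
      case False then show ?thesis by (simp add: binom_pmf_def)
    qed
  qed
  then show ?thesis using False by simp
next
  case True
  have "(\<Sum>j\<le>N. binom_pmf m x j * real (j choose i)) = (\<Sum>j\<in>{i..m}. binom_pmf m x j * real (j choose i))"
  proof (rule sum.mono_neutral_right)
    show "{i..m} \<subseteq> {..N}" using assms by auto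
    show "\<forall>j\<in>{..N} - {i..m}. binom_pmf m x j * real (j choose i) = 0"
    proof
      fix j assume "j \<in> {..N} - {i..m}"
      then have "j < i \<or> m < j" by auto
      then show "binom_pmf m x j * real (j choose i) = 0"
        by (auto simp: binom_pmf_def)
    qed
  qed simp
  also have "\<dots> = (\<Sum>j\<in>{i..m}. real (m choose i) * x ^ i * (real ((m - i) choose (j - i)) * x ^ (j - i) * (1 - x) ^ ((m - i) - (j - i))))"
  proof (rule sum.cong[OF refl])
    fix j assume j: "j \<in> {i..m}"
    have c: "(m choose j) * (j choose i) = (m choose i) * ((m - i) choose (j - i))"
      using choose_mult[of i j m] j by auto
    have e: "x ^ j = x ^ i * x ^ (j - i)" using j by (simp flip: power_add)
    have f: "m - j = (m - i) - (j - i)" using j by auto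
    show "binom_pmf m x j * real (j choose i) = real (m choose i) * x ^ i * (real ((m - i) choose (j - i)) * x ^ (j - i) * (1 - x) ^ ((m - i) - (j - i)))"
      unfolding binom_pmf_def e f[symmetric]
      using arg_cong[OF c, of real] by (simp add: algebra_simps)
  qed
  also have "\<dots> = real (m choose i) * x ^ i * (\<Sum>j\<in>{i..m}. real ((m - i) choose (j - i)) * x ^ (j - i) * (1 - x) ^ ((m - i) - (j - i)))"
    by (simp add: sum_distrib_left)
  also have "(\<Sum>j\<in>{i..m}. real ((m - i) choose (j - i)) * x ^ (j - i) * (1 - x) ^ ((m - i) - (j - i)))
      = (\<Sum>t\<le>m - i. real ((m - i) choose t) * x ^ t * (1 - x) ^ ((m - i) - t))"
  proof -
    have "(\<Sum>j\<in>{i..m}. real ((m - i) choose (j - i)) * x ^ (j - i) * (1 - x) ^ ((m - i) - (j - i)))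
       = (\<Sum>t\<in>{0..m - i}. real ((m - i) choose t) * x ^ t * (1 - x) ^ ((m - i) - t))"
      using True by (intro sum.reindex_bij_witness[where i="\<lambda>t. t + i" and j="\<lambda>j. j - i"]) auto
    then show ?thesis by (simp add: atLeast0AtMost)
  qed
  also have "\<dots> = (x + (1 - x)) ^ (m - i)" by (rule binomial_ring[symmetric])
  finally show ?thesis by simp
qed

lemma P_nonneg: assumes "0 < p" "p < 1" shows "0 \<le> careless_P n p k j"
  using assms by (auto simp: careless_P_def binom_pmf_def intro!: add_nonneg_nonneg mult_nonneg_nonneg)

lemma P_mom_raw:
  assumes "k \<le> n"
  shows "(\<Sum>j\<le>n. careless_P n p k j * real (j choose i)) =
     real k / real n * (real (k choose i) * (1 - p) ^ i) + real (n - k) / real n * (real (Suc k choose i) * (1 - p) ^ i)"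
proof (cases "k = n")
  case True
  then show ?thesis
    by (simp add: careless_P_def sum_distrib_left mult.assoc binom_moment)
next
  case False
  then have "Suc k \<le> n" using assms by simp
  have "(\<Sum>j\<le>n. careless_P n p k j * real (j choose i)) =
     real k / real n * (\<Sum>j\<le>n. binom_pmf k (1 - p) j * real (j choose i)) + real (n - k) / real n * (\<Sum>j\<le>n. binom_pmf (Suc k) (1 - p) j * real (j choose i))"
    by (simp add: careless_P_def sum_distrib_left sum.distrib algebra_simps)
  then show ?thesis using binom_moment[OF assms] binom_moment[OF \<open>Suc k \<le> n\<close>] by simp
qed

lemma choose_id: "real k * real (k choose l) = real l * real (k choose l) + real (Suc l) * real (k choose Suc l)"
proof (cases "l \<le> k")
  case True
  have "(k - l) * (k choose l) = Suc l * (k choose Suc l)"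
    by (metis binomial_absorb_comp binomial_absorption)
  then have "real (k - l) * real (k choose l) = real (Suc l) * real (k choose Suc l)"
    by (metis of_nat_mult)
  then show ?thesis using True by (simp add: of_nat_diff algebra_simps)
next
  case False then show ?thesis by (simp add: binomial_eq_0)
qed

lemma alg: fixes n k l C0 C1 y :: real
  assumes "n > 0" "k*C0 = l*C0 + (l+1)*C1"
  shows "k/n*(C1*y) + (n-k)/n*((C0+C1)*y) = y*((1-(l+1)/n)*C1 + (n-l)/n*C0)"
proof -
  have "k/n*(C1*y) + (n-k)/n*((C0+C1)*y) - y*((1-(l+1)/n)*C1 + (n-l)/n*C0) = y/n * (l*C0 + (l+1)*C1 - k*C0)"
    using assms(1) by (simp add: field_simps)
  then show ?thesis using assms(2) by simp
qed

lemma P_mom_Suc: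
  assumes "k \<le> n" "1 \<le> n"
  shows "(\<Sum>j\<le>n. careless_P n p k j * real (j choose Suc l)) =
     (1 - p) ^ Suc l * ((1 - real (Suc l) / real n) * real (k choose Suc l) + (real n - real l) / real n * real (k choose l))"
proof -
  have n: "real n > 0" using assms by simp
  have e: "real (n - k) = real n - real k" using assms by (simp add: of_nat_diff)
  show ?thesis
    unfolding P_mom_raw[OF assms(1)] binomial_Suc_Suc of_nat_add e
    using alg[OF n, of "real k" "real (k choose l)" "real l" "real (k choose Suc l)" "(1-p)^Suc l"] choose_id[of k l]
    by (simp add: algebra_simps)
qed

lemma P_rowsum:
  assumes "k \<le> n" "1 \<le> n"
  shows "(\<Sum>j\<le>n. careless_P n p k j) = 1"
proof -
  have "(\<Sum>j\<le>n. careless_P n p k j) = (\<Sum>j\<le>n. careless_P n p k j * real (j choose 0))" by simp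
  also have "\<dots> = 1" unfolding P_mom_raw[OF assms(1)] using assms
    by (simp add: of_nat_diff field_simps)
  finally show ?thesis .
qed

definition stepP :: "nat \<Rightarrow> real \<Rightarrow> (nat \<Rightarrow> real) \<Rightarrow> nat \<Rightarrow> real" where
  "stepP n p v j = (\<Sum>k\<le>n. v k * careless_P n p k j)"

definition mom :: "nat \<Rightarrow> (nat \<Rightarrow> real) \<Rightarrow> nat \<Rightarrow> real" where
  "mom n v i = (\<Sum>k\<le>n. v k * real (k choose i))"

lemma mom_step_gen:
  "mom n (stepP n p v) i = (\<Sum>k\<le>n. v k * (\<Sum>j\<le>n. careless_P n p k j * real (j choose i)))"
proof -
  have "mom n (stepP n p v) i = (\<Sum>j\<le>n. \<Sum>k\<le>n. v k * careless_P n p k j * real (j choose i))"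
    unfolding mom_def stepP_def by (simp add: sum_distrib_right)
  also have "\<dots> = (\<Sum>k\<le>n. \<Sum>j\<le>n. v k * careless_P n p k j * real (j choose i))"
    by (rule sum.swap)
  also have "\<dots> = (\<Sum>k\<le>n. v k * (\<Sum>j\<le>n. careless_P n p k j * real (j choose i)))"
    by (simp add: sum_distrib_left mult.assoc)
  finally show ?thesis .
qed

lemma mom_step_0:
  assumes "1 \<le> n" shows "mom n (stepP n p v) 0 = mom n v 0"
  unfolding mom_step_gen using P_rowsum[OF _ assms] by (simp add: mom_def)

lemma mom_step_Suc:
  assumes "1 \<le> n"
  shows "mom n (stepP n p v) (Suc l) =
     (1 - p) ^ Suc l * ((1 - real (Suc l) / real n) * mom n v (Suc l) + (real n - real l) / real n * mom n v l)"
proof -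
  let ?a = "(1 - p) ^ Suc l" and ?b = "1 - real (Suc l) / real n" and ?c = "(real n - real l) / real n"
  have "mom n (stepP n p v) (Suc l) = (\<Sum>k\<le>n. ?a * ?b * (v k * real (k choose Suc l)) + ?a * ?c * (v k * real (k choose l)))"
    unfolding mom_step_gen
  proof (rule sum.cong[OF refl])
    fix k assume "k \<in> {..n}"
    then have kn: "k \<le> n" by simp
    show "v k * (\<Sum>j\<le>n. careless_P n p k j * real (j choose Suc l)) = ?a * ?b * (v k * real (k choose Suc l)) + ?a * ?c * (v k * real (k choose l))"
      unfolding P_mom_Suc[OF kn assms] by (simp only: distrib_left ac_simps)
  qed
  also have "\<dots> = ?a * ?b * mom n v (Suc l) + ?a * ?c * mom n v l"
    unfolding mom_def by (simp add: sum.distrib sum_distrib_left)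
  finally show ?thesis by (simp only: distrib_left ac_simps)
qed

lemma mom_diff: "mom n (\<lambda>k. f k - g k) i = mom n f i - mom n g i"
  unfolding mom_def by (simp add: sum_subtractf algebra_simps)

lemma mom_top: "mom n v n = v n"
proof -
  have "mom n v n = (\<Sum>k\<in>insert n {..<n}. v k * real (k choose n))"
    unfolding mom_def by (simp add: lessThan_Suc_atMost[symmetric])
  also have "\<dots> = v n" by (simp add: binomial_eq_0)
  finally show ?thesis .
qed

lemma mom_split:
  assumes "j \<le> n"
  shows "mom n v j = v j + (\<Sum>k\<in>{Suc j..n}. v k * real (k choose j))"
proof -
  have "{..n} = {..<j} \<union> {j..n}" using assms by auto
  then have "mom n v j = (\<Sum>k\<in>{..<j}. v k * real (k choose j)) + (\<Sum>k\<in>{j..n}. v k * real (k choose j))"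
    unfolding mom_def by (simp add: sum.union_disjoint ivl_disj_int)
  also have "(\<Sum>k\<in>{..<j}. v k * real (k choose j)) = 0" by (simp add: binomial_eq_0)
  also have "(\<Sum>k\<in>{j..n}. v k * real (k choose j)) = v j + (\<Sum>k\<in>{Suc j..n}. v k * real (k choose j))"
    using assms by (simp add: sum.atLeast_Suc_atMost)
  finally show ?thesis by simp
qed

lemma mom_zero:
  assumes "\<And>i. i \<le> n \<Longrightarrow> mom n v i = 0" "j \<le> n"
  shows "v j = 0"
  using assms(2)
proof (induction "n - j" arbitrary: j rule: less_induct)
  case less
  have "\<forall>k\<in>{Suc j..n}. v k = 0"
  proof
    fix k assume k: "k \<in> {Suc j..n}"
    then have "n - k < n - j" "k \<le> n" by auto
    then show "v k = 0" by (rule less(1))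
  qed
  then have "(\<Sum>k\<in>{Suc j..n}. v k * real (k choose j)) = 0" by (intro sum.neutral) simp
  moreover have "mom n v j = 0" by (rule assms(1)[OF less.prems])
  ultimately show ?case using mom_split[OF less.prems, of v] by linarith
qed

function nrec :: "nat \<Rightarrow> (nat \<Rightarrow> real) \<Rightarrow> nat \<Rightarrow> real" where
  "nrec n M j = (if n < j then 0 else M j - (\<Sum>k\<in>{Suc j..n}. nrec n M k * real (k choose j)))"
  by pat_completeness auto
termination by (relation "Wellfounded.measure (\<lambda>(n, M, j). n - j)") auto

declare nrec.simps[simp del]

lemma mom_nrec: assumes "j \<le> n" shows "mom n (nrec n M) j = M j"
proof -
  let ?S = "(\<Sum>k\<in>{Suc j..n}. nrec n M k * real (k choose j))"
  have "nrec n M j = (if n < j then 0 else M j - ?S)" by (rule nrec.simps)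
  also have "\<dots> = M j - ?S" using assms by simp
  finally show ?thesis using mom_split[OF assms, of "nrec n M"] by linarith
qed

definition cfac :: "nat \<Rightarrow> real \<Rightarrow> nat \<Rightarrow> real" where
  "cfac n p i = (1 - p) ^ i * ((real n - real i + 1) / real n) / (1 - (1 - p) ^ i * (1 - real i / real n))"

definition Mst :: "nat \<Rightarrow> real \<Rightarrow> nat \<Rightarrow> real" where
  "Mst n p i = (\<Prod>l\<in>{1..i}. cfac n p l)"

lemma denom_pos:
  assumes "0 < p" "p < 1" "1 \<le> i" "i \<le> n"
  shows "0 < 1 - (1 - p) ^ i * (1 - real i / real n)"
proof -
  have a: "(1 - p) ^ i < 1" using assms by (simp add: power_less_one_iff)
  have b: "0 \<le> (1 - p) ^ i" using assms by simp
  have c: "1 - real i / real n \<le> 1" "0 \<le> 1 - real i / real n" using assms by auto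
  have "(1 - p) ^ i * (1 - real i / real n) \<le> (1 - p) ^ i"
    using mult_left_mono[OF c(1) b] by simp
  then show ?thesis using a by linarith
qed

lemma Mst_0: "Mst n p 0 = 1" by (simp add: Mst_def)

lemma Mst_Suc: "Mst n p (Suc l) = Mst n p l * cfac n p (Suc l)"
  by (simp add: Mst_def prod.cl_ivl_Suc mult.commute)

lemma lin_aux0: fixes X a b c Y :: real shows "X = a*(b*X + c*Y) \<longleftrightarrow> X*(1 - a*b) = a*c*Y"
  by (auto simp: algebra_simps)

lemma Mst_rec:
  assumes "0 < p" "p < 1" "Suc l \<le> n"
  shows "Mst n p (Suc l) = (1 - p) ^ Suc l * ((1 - real (Suc l) / real n) * Mst n p (Suc l) + (real n - real l) / real n * Mst n p l)"
proof -
  let ?a = "(1 - p) ^ Suc l" and ?b = "1 - real (Suc l) / real n" and ?c = "(real n - real l) / real n"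
  have d: "0 < 1 - ?a * ?b" using denom_pos[OF assms(1,2) _ assms(3)] by simp
  have "cfac n p (Suc l) = ?a * ?c / (1 - ?a * ?b)"
    unfolding cfac_def by (simp add: algebra_simps)
  then have "Mst n p (Suc l) * (1 - ?a * ?b) = ?a * ?c * Mst n p l"
    using d by (simp add: Mst_Suc)
  then show ?thesis using lin_aux0[of "Mst n p (Suc l)" ?a ?b ?c "Mst n p l"] by blast
qed

lemma mom_cong_le: "(\<And>j. j \<le> n \<Longrightarrow> v j = w j) \<Longrightarrow> mom n v i = mom n w i"
  unfolding mom_def by (intro sum.cong) auto

lemma sol_mom:
  assumes "0 < p" "p < 1" "1 \<le> n"
    and st: "\<And>j. j \<le> n \<Longrightarrow> stepP n p v j = v j" and s1: "(\<Sum>j\<le>n. v j) = 1"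
  shows "i \<le> n \<Longrightarrow> mom n v i = Mst n p i"
proof (induction i)
  case 0
  then show ?case using s1 by (simp add: mom_def Mst_0)
next
  case (Suc l)
  let ?a = "(1 - p) ^ Suc l" and ?b = "1 - real (Suc l) / real n" and ?c = "(real n - real l) / real n"
  have IH: "mom n v l = Mst n p l" using Suc by simp
  have "mom n v (Suc l) = mom n (stepP n p v) (Suc l)" using st by (intro mom_cong_le) simp
  also have "\<dots> = ?a * (?b * mom n v (Suc l) + ?c * mom n v l)" by (rule mom_step_Suc[OF assms(3)])
  finally have X: "mom n v (Suc l) * (1 - ?a * ?b) = ?a * ?c * Mst n p l"
    using IH lin_aux0[of "mom n v (Suc l)" ?a ?b ?c "mom n v l"] by simp
  have Y: "Mst n p (Suc l) * (1 - ?a * ?b) = ?a * ?c * Mst n p l"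
    using Mst_rec[OF assms(1,2) Suc.prems] lin_aux0[of "Mst n p (Suc l)" ?a ?b ?c "Mst n p l"] by blast
  have d: "0 < 1 - ?a * ?b" using denom_pos[OF assms(1,2) _ Suc.prems] by simp
  from X Y have "mom n v (Suc l) * (1 - ?a * ?b) = Mst n p (Suc l) * (1 - ?a * ?b)" by (simp only:)
  with d show ?case by (metis mult_right_cancel less_irrefl)
qed

lemma stat_mom:
  assumes "0 < p" "p < 1" "1 \<le> n" "careless_stationary n p v" "i \<le> n"
  shows "mom n v i = Mst n p i"
proof (rule sol_mom[OF assms(1,2,3) _ _ assms(5)])
  fix j assume j: "j \<le> n"
  have "v j = (\<Sum>k\<le>n. v k * careless_P n p k j)"
    using assms(4) j unfolding careless_stationary_def by blast
  then show "stepP n p v j = v j" unfolding stepP_def by (rule sym)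
next
  show "(\<Sum>j\<le>n. v j) = 1" using assms(4) unfolding careless_stationary_def by blast
qed

lemma stat_unique:
  assumes "0 < p" "p < 1" "1 \<le> n" "careless_stationary n p v" "careless_stationary n p w"
  shows "v = w"
proof
  fix j
  show "v j = w j"
  proof (cases "j \<le> n")
    case True
    have "\<And>i. i \<le> n \<Longrightarrow> mom n (\<lambda>k. v k - w k) i = 0"
      using stat_mom[OF assms(1,2,3,4)] stat_mom[OF assms(1,2,3,5)] by (simp add: mom_diff)
    from mom_zero[OF this True] show ?thesis by simp
  next
    case False
    then show ?thesis using assms(4,5) unfolding careless_stationary_def by simp
  qed
qed

lemma stat_exists:
  assumes p0: "0 < p" and p1: "p < 1" and n1: "1 \<le> n"
  shows "\<exists>v. careless_stationary n p v"
proof -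
  define v0 where "v0 = nrec n (Mst n p)"
  have mv: "\<And>i. i \<le> n \<Longrightarrow> mom n v0 i = Mst n p i" unfolding v0_def by (rule mom_nrec)
  have dz: "\<And>i. i \<le> n \<Longrightarrow> mom n (\<lambda>j. stepP n p v0 j - v0 j) i = 0"
  proof -
    fix i assume i: "i \<le> n"
    show "mom n (\<lambda>j. stepP n p v0 j - v0 j) i = 0"
    proof (cases i)
      case 0
      then show ?thesis by (simp add: mom_diff mom_step_0[OF n1])
    next
      case (Suc l)
      have "mom n (stepP n p v0) (Suc l) = Mst n p (Suc l)"
        unfolding mom_step_Suc[OF n1] using mv[of l] mv[of "Suc l"] i Suc Mst_rec[OF p0 p1, of l n] by simp
      then show ?thesis using mv[OF i] Suc by (simp add: mom_diff)
    qed
  qed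
  have fx: "\<And>j. j \<le> n \<Longrightarrow> stepP n p v0 j = v0 j"
    using mom_zero[OF dz] by simp
  have s1: "(\<Sum>j\<le>n. v0 j) = 1"
    using mv[of 0] by (simp add: mom_def Mst_0)
  define a where "a = (\<lambda>j. \<bar>v0 j\<bar>)"
  have Pn: "\<And>k j. 0 \<le> careless_P n p k j" using P_nonneg[OF p0 p1] by blast
  have le: "a j \<le> stepP n p a j" if "j \<le> n" for j
  proof -
    have "a j = \<bar>\<Sum>k\<le>n. v0 k * careless_P n p k j\<bar>" using fx[OF that] unfolding a_def stepP_def by simp
    also have "\<dots> \<le> (\<Sum>k\<le>n. \<bar>v0 k * careless_P n p k j\<bar>)" by (rule sum_abs)
    also have "\<dots> = stepP n p a j" unfolding stepP_def a_def using Pn by (simp add: abs_mult)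
    finally show ?thesis .
  qed
  have ssum: "(\<Sum>j\<le>n. stepP n p a j) = (\<Sum>k\<le>n. a k)"
  proof -
    have "(\<Sum>j\<le>n. stepP n p a j) = (\<Sum>j\<le>n. \<Sum>k\<le>n. a k * careless_P n p k j)" unfolding stepP_def by simp
    also have "\<dots> = (\<Sum>k\<le>n. \<Sum>j\<le>n. a k * careless_P n p k j)" by (rule sum.swap)
    also have "\<dots> = (\<Sum>k\<le>n. a k * (\<Sum>j\<le>n. careless_P n p k j))" by (simp add: sum_distrib_left)
    also have "\<dots> = (\<Sum>k\<le>n. a k)" using P_rowsum[OF _ n1] by simp
    finally show ?thesis .
  qed
  have "(\<Sum>j\<le>n. stepP n p a j - a j) = 0" using ssum by (simp add: sum_subtractf)
  moreover have "\<forall>j\<in>{..n}. 0 \<le> stepP n p a j - a j" using le by simp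
  ultimately have eqa: "\<And>j. j \<le> n \<Longrightarrow> stepP n p a j = a j"
    using sum_nonneg_eq_0_iff[of "{..n}" "\<lambda>j. stepP n p a j - a j"] by auto
  define S where "S = (\<Sum>k\<le>n. a k)"
  have "1 \<le> S" unfolding S_def a_def using sum_abs[of v0 "{..n}"] s1 by simp
  then have S0: "0 < S" by simp
  define mu where "mu = (\<lambda>j. if j \<le> n then a j / S else 0)"
  have "careless_stationary n p mu"
    unfolding careless_stationary_def
  proof (intro conjI allI impI)
    fix j assume "n < j" then show "mu j = 0" unfolding mu_def by simp
  next
    fix j assume "j \<le> n" then show "0 \<le> mu j" unfolding mu_def a_def using S0 by simp
  next
    show "(\<Sum>j\<le>n. mu j) = 1" unfolding mu_def using S0 by (simp add: sum_divide_distrib[symmetric] S_def)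
  next
    fix j assume j: "j \<le> n"
    have "(\<Sum>k\<le>n. mu k * careless_P n p k j) = (\<Sum>k\<le>n. a k * careless_P n p k j) / S"
      unfolding mu_def by (simp add: sum_divide_distrib)
    also have "\<dots> = a j / S" using eqa[OF j] unfolding stepP_def by simp
    finally show "mu j = (\<Sum>k\<le>n. mu k * careless_P n p k j)" using j unfolding mu_def by simp
  qed
  then show ?thesis by blast
qed

lemma nu_stat:
  assumes "0 < p" "p < 1" "1 \<le> n"
  shows "careless_stationary n p (careless_nu n p)"
proof -
  have "\<exists>!v. careless_stationary n p v"
    using stat_exists[OF assms] stat_unique[OF assms] by blast
  then show ?thesis unfolding careless_nu_def by (rule theI')
qed

lemma nu_top:
  assumes "0 < p" "p < 1" "1 \<le> n"
  shows "careless_nu n p n = Mst n p n"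
  using stat_mom[OF assms nu_stat[OF assms], of n] mom_top[of n "careless_nu n p"] by simp

lemma mu_eq:
  assumes "0 < p" "p < 1" "1 \<le> n"
  shows "careless_mu n p = careless_nu n p n * (1 - (1 - p) ^ n)"
proof -
  have st: "careless_nu n p n = (\<Sum>k\<le>n. careless_nu n p k * careless_P n p k n)"
    using nu_stat[OF assms] unfolding careless_stationary_def by blast
  also have "\<dots> = careless_mu n p + careless_nu n p n * careless_P n p n n"
    unfolding careless_mu_def by (simp add: lessThan_Suc_atMost[symmetric])
  also have "careless_P n p n n = (1 - p) ^ n"
    using assms by (simp add: careless_P_def binom_pmf_def)
  finally show ?thesis by (simp add: algebra_simps)
qed

lemma prod_rev_fact: "(\<Prod>l\<in>{1..n}. real n - real l + 1) = fact n"
proof -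
  have "(\<Prod>l\<in>{1..n}. real n - real l + 1) = (\<Prod>l\<in>{1..n}. real l)"
    by (rule prod.reindex_bij_witness[where i="\<lambda>l. n + 1 - l" and j="\<lambda>l. n + 1 - l"]) (auto simp: of_nat_diff)
  also have "\<dots> = fact n" by (simp add: fact_prod)
  finally show ?thesis .
qed

lemma Mst_formula:
  assumes "0 < p" "p < 1" "1 \<le> n"
  shows "Mst n p n = (fact n / real n ^ n) * (1 - p) ^ (n * (n + 1) div 2)
           / (\<Prod>l\<in>{1..n}. 1 - (1 - p) ^ l * (1 - real l / real n))"
proof -
  have 1: "Mst n p n = (\<Prod>l\<in>{1..n}. (1 - p) ^ l) * (\<Prod>l\<in>{1..n}. (real n - real l + 1) / real n)
           / (\<Prod>l\<in>{1..n}. 1 - (1 - p) ^ l * (1 - real l / real n))"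
    unfolding Mst_def cfac_def by (simp add: prod.distrib prod_dividef)
  have 2: "(\<Prod>l\<in>{1..n}. (1 - p) ^ l) = (1 - p) ^ (\<Sum>l\<in>{1..n}. l)" by (simp add: power_sum)
  have 3: "(\<Sum>l\<in>{1..n}. l) = n * (n + 1) div 2" using gauss_sum_from_Suc_0[of n, where 'a=nat] by simp
  have 4: "(\<Prod>l\<in>{1..n}. (real n - real l + 1) / real n) = (\<Prod>l\<in>{1..n}. real n - real l + 1) / (\<Prod>l\<in>{1..n}. real n)"
    by (rule prod_dividef)
  have 5: "(\<Prod>l\<in>{1..n}. real n - real l + 1) / (\<Prod>l\<in>{1..n}. real n) = fact n / real n ^ n" unfolding prod_rev_fact by simp
  show ?thesis unfolding 1 2 3 4 5 by (simp only: ac_simps)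
qed

lemma qpoch_props:
  fixes x :: real
  assumes "0 \<le> x" "x < 1"
  shows "(\<lambda>n. \<Prod>l\<in>{1..n}. 1 - x ^ l) \<longlonglongrightarrow> qpoch_inf x" "qpoch_inf x \<noteq> 0"
proof -
  define f where "f = (\<lambda>r::nat. 1 - x ^ Suc r)"
  have "summable (\<lambda>r. x * x ^ r)" using assms by (intro summable_mult summable_geometric) simp
  then have "summable (\<lambda>r. norm (f r - 1))" unfolding f_def using assms by simp
  then have cp: "convergent_prod f"
    by (intro abs_convergent_prod_imp_convergent_prod summable_imp_abs_convergent_prod)
  have fnz: "\<And>r. f r \<noteq> 0"
  proof -
    fix r
    have "x ^ Suc r \<le> x ^ 1" using assms by (intro power_decreasing) auto
    then have "x ^ Suc r < 1" using assms by simp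
    then show "f r \<noteq> 0" unfolding f_def by simp
  qed
  have q: "qpoch_inf x = prodinf f" unfolding qpoch_inf_def f_def by simp
  show "qpoch_inf x \<noteq> 0" unfolding q by (rule prodinf_nonzero[OF cp fnz])
  have "(\<lambda>n. \<Prod>i\<le>n. f i) \<longlonglongrightarrow> qpoch_inf x" unfolding q by (rule convergent_prod_LIMSEQ[OF cp])
  moreover have "(\<Prod>i\<le>n. f i) = (\<Prod>l\<in>{1..Suc n}. 1 - x ^ l)" for n
  proof -
    have "(\<Prod>l\<in>{1..Suc n}. 1 - x ^ l) = (\<Prod>k<Suc n. 1 - x ^ Suc k)"
      by (simp only: One_nat_def prod.atLeast1_atMost_eq)
    also have "\<dots> = (\<Prod>i\<le>n. f i)" by (simp only: lessThan_Suc_atMost f_def)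
    finally show ?thesis by simp
  qed
  ultimately have "(\<lambda>n. \<Prod>l\<in>{1..Suc n}. 1 - x ^ l) \<longlonglongrightarrow> qpoch_inf x" by simp
  then show "(\<lambda>n. \<Prod>l\<in>{1..n}. 1 - x ^ l) \<longlonglongrightarrow> qpoch_inf x"
    by (rule iffD1[OF filterlim_sequentially_Suc])
qed

lemma sum_lx:
  fixes x :: real
  assumes "0 \<le> x" "x < 1"
  shows "(\<Sum>l\<in>{1..n}. real l * x ^ l) \<le> 1 / (1 - x) ^ 2"
proof -
  have "(\<Sum>l\<in>{1..n}. real l * x ^ l) \<le> (\<Sum>l\<in>{1..n}. real l * x ^ (l - 1))"
  proof (rule sum_mono)
    fix l assume "l \<in> {1..n}"
    then have "x ^ l \<le> x ^ (l - 1)" using assms by (intro power_decreasing) auto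
    then show "real l * x ^ l \<le> real l * x ^ (l - 1)" by (intro mult_left_mono) auto
  qed
  also have "\<dots> = (\<Sum>m<n. real (Suc m) * x ^ m)"
    by (simp add: prod.atLeast1_atMost_eq sum.atLeast1_atMost_eq)
  also have "\<dots> \<le> (\<Sum>m. real (Suc m) * x ^ m)"
    using geometric_deriv_sums[of x] assms
    by (intro sum_le_suminf) (auto simp: sums_iff)
  also have "\<dots> = 1 / (1 - x) ^ 2" using geometric_deriv_sums[of x] assms by (simp add: sums_iff)
  finally show ?thesis .
qed

lemma D_bounds:
  assumes p0: "0 < p" and p1: "p < 1" and n1: "1 \<le> n"
  defines "x \<equiv> 1 - p"
  shows "(\<Prod>l\<in>{1..n}. 1 - x ^ l) \<le> (\<Prod>l\<in>{1..n}. 1 - x ^ l * (1 - real l / real n))"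
    and "(\<Prod>l\<in>{1..n}. 1 - x ^ l * (1 - real l / real n)) \<le> (\<Prod>l\<in>{1..n}. 1 - x ^ l) * exp (1 / (real n * p ^ 3))"
proof -
  have x0: "0 \<le> x" "x < 1" using p0 p1 unfolding x_def by auto
  have xl: "x ^ l \<le> 1" for l using x0 by (simp add: power_le_one)
  show "(\<Prod>l\<in>{1..n}. 1 - x ^ l) \<le> (\<Prod>l\<in>{1..n}. 1 - x ^ l * (1 - real l / real n))"
  proof (rule prod_mono)
    fix l assume l: "l \<in> {1..n}"
    have "x ^ l * (1 - real l / real n) \<le> x ^ l * 1" using x0 l by (intro mult_left_mono) auto
    then show "0 \<le> 1 - x ^ l \<and> 1 - x ^ l \<le> 1 - x ^ l * (1 - real l / real n)" using xl[of l] by simp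
  qed
  define t where "t = (\<lambda>l. real l * x ^ l / (real n * p))"
  have t0: "0 \<le> t l" for l unfolding t_def using x0 p0 by simp
  have "(\<Prod>l\<in>{1..n}. 1 - x ^ l * (1 - real l / real n)) \<le> (\<Prod>l\<in>{1..n}. (1 - x ^ l) * (1 + t l))"
  proof (rule prod_mono)
    fix l assume l: "l \<in> {1..n}"
    have d: "0 \<le> 1 - x ^ l * (1 - real l / real n)"
      using denom_pos[OF p0 p1, of l n] l unfolding x_def by simp
    have "x ^ l \<le> x ^ 1" using l x0 by (intro power_decreasing) auto
    then have px: "p \<le> 1 - x ^ l" unfolding x_def by simp
    have A: "real l * x ^ l / real n \<le> (1 - x ^ l) * t l"
    proof -
      have "(1 - x ^ l) * t l = (real l * x ^ l / real n) * ((1 - x ^ l) / p)"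
        unfolding t_def using p0 by (simp add: field_simps)
      moreover have "1 \<le> (1 - x ^ l) / p" using px p0 by simp
      moreover have "0 \<le> real l * x ^ l / real n" using x0 by simp
      ultimately show ?thesis by (metis mult_left_mono mult.right_neutral)
    qed
    have "1 - x ^ l * (1 - real l / real n) = (1 - x ^ l) + real l * x ^ l / real n"
      by (simp add: algebra_simps)
    also have "\<dots> \<le> (1 - x ^ l) * (1 + t l)" using A by (simp add: algebra_simps)
    finally show "0 \<le> 1 - x ^ l * (1 - real l / real n) \<and> 1 - x ^ l * (1 - real l / real n) \<le> (1 - x ^ l) * (1 + t l)"
      using d by simp
  qed
  also have "\<dots> = (\<Prod>l\<in>{1..n}. 1 - x ^ l) * (\<Prod>l\<in>{1..n}. 1 + t l)" by (rule prod.distrib)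
  also have "\<dots> \<le> (\<Prod>l\<in>{1..n}. 1 - x ^ l) * exp (1 / (real n * p ^ 3))"
  proof (rule mult_left_mono)
    show "0 \<le> (\<Prod>l\<in>{1..n}. 1 - x ^ l)" using xl by (intro prod_nonneg) (simp add: algebra_simps)
    have "(\<Prod>l\<in>{1..n}. 1 + t l) \<le> exp (sum t {1..n})" using t0 by (intro prod_le_exp_sum) auto
    also have "sum t {1..n} = (\<Sum>l\<in>{1..n}. real l * x ^ l) / (real n * p)"
      unfolding t_def by (simp add: sum_divide_distrib)
    also have "\<dots> \<le> (1 / (1 - x) ^ 2) / (real n * p)"
      using sum_lx[OF x0, of n] p0 n1 by (intro divide_right_mono) auto
    also have "(1 / (1 - x) ^ 2) / (real n * p) = 1 / (real n * p ^ 3)"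
      unfolding x_def by (simp add: power2_eq_square power3_eq_cube field_simps)
    finally show "(\<Prod>l\<in>{1..n}. 1 + t l) \<le> exp (1 / (real n * p ^ 3))" by simp
  qed
  finally show "(\<Prod>l\<in>{1..n}. 1 - x ^ l * (1 - real l / real n)) \<le> (\<Prod>l\<in>{1..n}. 1 - x ^ l) * exp (1 / (real n * p ^ 3))" .
qed

theorem mainTheorem6:
  fixes p q :: real
  assumes "0 < p" "p < 1" "q = 1 - p"
  shows "((\<lambda>n. careless_nu n p n) \<sim>[at_top]
           (\<lambda>n. 1 / qpoch_inf q * (fact n / real n ^ n) * q ^ (n * (n + 1) div 2))) \<and>
         (\<forall>n\<ge>1. careless_mu n p = careless_nu n p n * (1 - q ^ n)) \<and>
         ((\<lambda>n. careless_mu n p) \<sim>[at_top]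
           (\<lambda>n. 1 / qpoch_inf q * (fact n / real n ^ n) * q ^ (n * (n + 1) div 2)))"
proof -
  note p0 = assms(1) and p1 = assms(2) and qd = assms(3)
  have q0: "0 < q" "q < 1" using p0 p1 qd by auto
  define Q where "Q = qpoch_inf q"
  define A where "A = (\<lambda>n. \<Prod>l\<in>{1..n}. 1 - q ^ l)"
  define D where "D = (\<lambda>n. \<Prod>l\<in>{1..n}. 1 - q ^ l * (1 - real l / real n))"
  define g where "g = (\<lambda>n. 1 / qpoch_inf q * (fact n / real n ^ n) * q ^ (n * (n + 1) div 2))"
  have AQ: "A \<longlonglongrightarrow> Q" and Q0: "Q \<noteq> 0"
    using qpoch_props[of q] q0 unfolding A_def Q_def by auto
  have lim0: "(\<lambda>n. 1 / (real n * p ^ 3)) \<longlonglongrightarrow> 0"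
  proof -
    have "(\<lambda>n. (1 / p ^ 3) * (1 / real n)) \<longlonglongrightarrow> (1 / p ^ 3) * 0"
      by (intro tendsto_mult tendsto_const lim_1_over_n)
    then show ?thesis by (simp add: mult.commute)
  qed
  have up: "(\<lambda>n. A n * exp (1 / (real n * p ^ 3))) \<longlonglongrightarrow> Q * exp 0"
    by (intro tendsto_mult AQ tendsto_exp lim0)
  have DQ: "D \<longlonglongrightarrow> Q"
  proof (rule tendsto_sandwich[OF _ _ AQ])
    show "\<forall>\<^sub>F n in sequentially. A n \<le> D n"
      using eventually_ge_at_top[of 1]
      by eventually_elim (use D_bounds(1)[OF p0 p1] qd in \<open>simp add: A_def D_def\<close>)
    show "\<forall>\<^sub>F n in sequentially. D n \<le> A n * exp (1 / (real n * p ^ 3))"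
      using eventually_ge_at_top[of 1]
      by eventually_elim (use D_bounds(2)[OF p0 p1] qd in \<open>simp add: A_def D_def\<close>)
    show "(\<lambda>n. A n * exp (1 / (real n * p ^ 3))) \<longlonglongrightarrow> Q" using up by simp
  qed
  have Dpos: "0 < D n" if "1 \<le> n" for n
    unfolding D_def using denom_pos[OF p0 p1] that qd by (intro prod_pos) auto
  have nu_eq: "careless_nu n p n = (fact n / real n ^ n) * q ^ (n * (n + 1) div 2) / D n" if "1 \<le> n" for n
    using nu_top[OF p0 p1 that] Mst_formula[OF p0 p1 that] qd unfolding D_def by simp
  have ratio: "careless_nu n p n / g n = Q / D n" if "1 \<le> n" for n
  proof -
    have f0: "fact n / real n ^ n \<noteq> (0::real)" using that by simp
    have q0': "q ^ (n * (n + 1) div 2) \<noteq> 0" using q0 by simp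
    show ?thesis unfolding nu_eq[OF that] g_def Q_def using f0 q0' Q0 Dpos[OF that] unfolding Q_def
      by (simp add: field_simps)
  qed
  have "(\<lambda>n. Q / D n) \<longlonglongrightarrow> Q / Q" by (intro tendsto_divide DQ tendsto_const Q0)
  then have "(\<lambda>n. Q / D n) \<longlonglongrightarrow> 1" using Q0 by simp
  then have "(\<lambda>n. careless_nu n p n / g n) \<longlonglongrightarrow> 1"
  proof (rule Lim_transform_eventually)
    show "\<forall>\<^sub>F n in sequentially. Q / D n = careless_nu n p n / g n"
      using eventually_ge_at_top[of 1] by eventually_elim (simp add: ratio)
  qed
  then have E1: "(\<lambda>n. careless_nu n p n) \<sim>[at_top] g" by (rule asymp_equivI')
  have E2: "\<forall>n\<ge>1. careless_mu n p = careless_nu n p n * (1 - q ^ n)"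
    using mu_eq[OF p0 p1] qd by simp
  have "(\<lambda>n. 1 - q ^ n) \<longlonglongrightarrow> 1 - 0"
    using q0 by (intro tendsto_diff tendsto_const LIMSEQ_power_zero) auto
  then have "(\<lambda>n. 1 - q ^ n) \<sim>[at_top] (\<lambda>_. 1)"
    by (intro tendsto_imp_asymp_equiv_const) auto
  from asymp_equiv_mult[OF E1 this]
  have "(\<lambda>n. careless_nu n p n * (1 - q ^ n)) \<sim>[at_top] g" by simp
  moreover have "(\<lambda>n. careless_mu n p) \<sim>[at_top] (\<lambda>n. careless_nu n p n * (1 - q ^ n))"
  proof (rule asymp_equiv_refl_ev)
    show "\<forall>\<^sub>F n in at_top. careless_mu n p = careless_nu n p n * (1 - q ^ n)"
      using eventually_ge_at_top[of 1] by eventually_elim (simp add: E2)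
  qed
  ultimately have E3: "(\<lambda>n. careless_mu n p) \<sim>[at_top] g" by (rule asymp_equiv_trans[rotated])
  show ?thesis using E1 E2 E3 unfolding g_def by blast
qed

end
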